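(* Let $\rho=(r,U)$ be a universally quantified rule and let $(\pi_i\colon L\to L_i,\gamma_i\colon L_i\rightharpoonup R_i)$, $i\in\{1,2\}$, be instantiations of $\rho$ with $(\pi_2,\gamma_2)=(\pi_1,\gamma_1)\oplus u$ for some $u\in U$. Let $\mu_L\colon L_2\rightharpoonup L_1$, $\mu_R\colon R_2\rightharpoonup R_1$ and $\mu_R'\colon R_1\rightharpoonup R'$ be subgraph morphisms with $\gamma_1\circ\mu_L=\mu_R\circ\gamma_2$, and let $m\colon R'\to G$ be a total injective morphism. Then for every pushout complement $H_2$ of $\mu_R'\circ\mu_R\circ\gamma_2$ and $m$ whose morphism $m_2'\colon L_2\to H_2$ is total and injective, there is a pushout complement $H_1$ of $\mu_R'\circ\gamma_1$ and $m$ with $H_1\sqsubseteq H_2$.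
   Context: Fix a finite label set $\Lambda$ with arity function $\mathrm{ar}\colon\Lambda\to\mathbb N$. A (hyper)graph $G=(V_G,E_G,c_G,l_G)$ consists of finite sets $V_G$ (nodes) and $E_G$ (edges), a connection function $c_G\colon E_G\to V_G^*$ and a labelling $l_G\colon E_G\to\Lambda$ with $|c_G(e)|=\mathrm{ar}(l_G(e))$; an edge $e$ is incident to a node $v$ if $v$ occurs in $c_G(e)$. A morphism $\phi\colon G\rightharpoonup G'$ is a pair of partial functions $\phi_V,\phi_E$ such that whenever $\phi_E(e)$ is defined, $\phi_V$ is defined on all nodes incident to $e$, $l_{G'}(\phi_E(e))=l_G(e)$ and $\phi_V(c_G(e))=c_{G'}(\phi_E(e))$. "Total" means defined everywhere. Pushouts are taken in the category of graphs and partial morphisms (always exist, unique up to isomorphism; concretely: quotient of $G_1\sqcup G_2$ by the smallest equivalence identifying $\phi(x)$ and $\psi(x)$ for $x\in G_0$, dropping classes containing the image of an $x\in G_0$ on which $\phi$ or $\psi$ is undefined and edge classes incident to dropped node classes). Given $a\colon A\rightharpoonup B$ and $b\colon B\rightharpoonup D$, a pushout complement of $a$ and $b$ is a graph $C$ with morphisms $c\colon A\rightharpoonup C$, $d\colon C\rightharpoonup D$ such that $D$ with $b,d$ is a pushout of $a,c$. A subgraph morphism is an injective and surjective morphism; $G_1\sqsubseteq G_2$ ($G_1$ is a subgraph of $G_2$) if there is a subgraph morphism $G_2\rightharpoonup G_1$. A universally quantified rule is $\rho=(r,U)$ with $r\colon L\rightharpoonup R$ and $U$ a finite set of pairs $u=(p_u,q_u)$,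 $p_u\colon L\to L_u$ total injective, $q_u\colon L_u\rightharpoonup R_u$, such that for every $x\in L$, $q_u(p_u(x))$ is defined and has exactly one preimage under $q_u$; $Q(u)$ is the set of $v\in V_L$ such that some edge incident to $p_u(v)$ has no preimage under $p_u$, required nonempty. Instantiations $(\pi\colon L\to\overline L$ total injective, $\gamma\colon\overline L\rightharpoonup\overline R)$ are defined recursively: $(\mathrm{id}_L,r)$ is one (length 0); if $(\pi,\gamma)$ is one of length $n$ and $u\in U$, let $\overline L_u$ with $p_u'\colon\overline L\to\overline L_u$, $\pi'\colon L_u\to\overline L_u$ be the pushout of $\pi,p_u$, let $\overline R_u$ with $\alpha\colon\overline R\rightharpoonup\overline R_u$, $\beta\colon R_u\rightharpoonup\overline R_u$ be the pushout of $\gamma\circ\pi$ and $q_u\circ p_u$, and $\eta\colon\overline L_u\rightharpoonup\overline R_u$ the unique morphism with $\eta\circ p_u'=\alpha\circ\gamma$, $\eta\circ\pi'=\beta\circ q_u$; then $(\pi,\gamma)\oplus u:=(p_u'\circ\pi,\eta)$ is an instantiation of length $n+1$. *)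

theory Defs
  imports Main
begin

(* Nodes and edges are drawn from nat (every finite graph is isomorphic to one
   of these, so nothing is lost; all constructions are only up to isomorphism). *)
record 'l hgraph =
  V :: "nat set"
  E :: "nat set"
  conn :: "nat \<Rightarrow> nat list"
  lab :: "nat \<Rightarrow> 'l"

definition wf_graph :: "('l \<Rightarrow> nat) \<Rightarrow> 'l hgraph \<Rightarrow> bool" where
  "wf_graph ar G \<longleftrightarrow> finite (V G) \<and> finite (E G) \<and>
     (\<forall>e\<in>E G. set (conn G e) \<subseteq> V G \<and> length (conn G e) = ar (lab G e))"

type_synonym morph = "(nat \<rightharpoonup> nat) \<times> (nat \<rightharpoonup> nat)"

abbreviation mV :: "morph \<Rightarrow> nat \<rightharpoonup> nat" where "mV f \<equiv> fst f"
abbreviation mE :: "morph \<Rightarrow> nat \<rightharpoonup> nat" where "mE f \<equiv> snd f"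

definition is_morph :: "'l hgraph \<Rightarrow> 'l hgraph \<Rightarrow> morph \<Rightarrow> bool" where
  "is_morph G G' f \<longleftrightarrow>
     dom (mV f) \<subseteq> V G \<and> ran (mV f) \<subseteq> V G' \<and>
     dom (mE f) \<subseteq> E G \<and> ran (mE f) \<subseteq> E G' \<and>
     (\<forall>e e'. mE f e = Some e' \<longrightarrow>
        set (conn G e) \<subseteq> dom (mV f) \<and> lab G' e' = lab G e \<and>
        map (\<lambda>v. the (mV f v)) (conn G e) = conn G' e')"

definition mcomp :: "morph \<Rightarrow> morph \<Rightarrow> morph" (infixl "\<circ>\<^sub>g" 55) where
  "g \<circ>\<^sub>g f = (mV g \<circ>\<^sub>m mV f, mE g \<circ>\<^sub>m mE f)"

definition id_morph :: "'l hgraph \<Rightarrow> morph" where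
  "id_morph G = ((\<lambda>v. if v \<in> V G then Some v else None), (\<lambda>e. if e \<in> E G then Some e else None))"

definition total :: "'l hgraph \<Rightarrow> morph \<Rightarrow> bool" where
  "total G f \<longleftrightarrow> dom (mV f) = V G \<and> dom (mE f) = E G"

definition injective :: "morph \<Rightarrow> bool" where
  "injective f \<longleftrightarrow> inj_on (mV f) (dom (mV f)) \<and> inj_on (mE f) (dom (mE f))"

definition surjective :: "'l hgraph \<Rightarrow> morph \<Rightarrow> bool" where
  "surjective G' f \<longleftrightarrow> ran (mV f) = V G' \<and> ran (mE f) = E G'"

definition total_inj :: "('l \<Rightarrow> nat) \<Rightarrow> 'l hgraph \<Rightarrow> 'l hgraph \<Rightarrow> morph \<Rightarrow> bool" where
  "total_inj ar G G' f \<longleftrightarrow> is_morph G G' f \<and> total G f \<and> injective f"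

definition subgraph_morph :: "'l hgraph \<Rightarrow> 'l hgraph \<Rightarrow> morph \<Rightarrow> bool" where
  "subgraph_morph G G' f \<longleftrightarrow> is_morph G G' f \<and> injective f \<and> surjective G' f"

definition subgraph :: "'l hgraph \<Rightarrow> 'l hgraph \<Rightarrow> bool" where
  "subgraph G1 G2 \<longleftrightarrow> (\<exists>f. subgraph_morph G2 G1 f)"

definition is_pushout :: "('l \<Rightarrow> nat) \<Rightarrow> 'l hgraph \<Rightarrow> 'l hgraph \<Rightarrow> 'l hgraph \<Rightarrow> morph \<Rightarrow> morph
    \<Rightarrow> 'l hgraph \<Rightarrow> morph \<Rightarrow> morph \<Rightarrow> bool" where
  "is_pushout ar G0 G1 G2 phi psi D b d \<longleftrightarrow>
     wf_graph ar G0 \<and> wf_graph ar G1 \<and> wf_graph ar G2 \<and> wf_graph ar D \<and>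
     is_morph G0 G1 phi \<and> is_morph G0 G2 psi \<and> is_morph G1 D b \<and> is_morph G2 D d \<and>
     b \<circ>\<^sub>g phi = d \<circ>\<^sub>g psi \<and>
     (\<forall>(X :: 'l hgraph) x1 x2. wf_graph ar X \<and> is_morph G1 X x1 \<and> is_morph G2 X x2 \<and>
        x1 \<circ>\<^sub>g phi = x2 \<circ>\<^sub>g psi \<longrightarrow>
        (\<exists>!h. is_morph D X h \<and> h \<circ>\<^sub>g b = x1 \<and> h \<circ>\<^sub>g d = x2))"

definition is_po_complement :: "('l \<Rightarrow> nat) \<Rightarrow> 'l hgraph \<Rightarrow> 'l hgraph \<Rightarrow> 'l hgraph \<Rightarrow> morph \<Rightarrow> morph
    \<Rightarrow> 'l hgraph \<Rightarrow> morph \<Rightarrow> morph \<Rightarrow> bool" where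
  "is_po_complement ar A B D a b C c d \<longleftrightarrow> is_pushout ar A B C a c D b d"

record 'l qpair =
  Lu :: "'l hgraph"
  Ru :: "'l hgraph"
  pu :: morph
  qu :: morph

record 'l qrule =
  rL :: "'l hgraph"
  rR :: "'l hgraph"
  rr :: morph
  rU :: "'l qpair set"

definition Qset :: "'l qrule \<Rightarrow> 'l qpair \<Rightarrow> nat set" where
  "Qset \<rho> u = {v \<in> V (rL \<rho>). \<exists>e \<in> E (Lu u).
      the (mV (pu u) v) \<in> set (conn (Lu u) e) \<and> e \<notin> ran (mE (pu u))}"

definition wf_qpair :: "('l \<Rightarrow> nat) \<Rightarrow> 'l qrule \<Rightarrow> 'l qpair \<Rightarrow> bool" where
  "wf_qpair ar \<rho> u \<longleftrightarrow>
     wf_graph ar (Lu u) \<and> wf_graph ar (Ru u) \<and>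
     total_inj ar (rL \<rho>) (Lu u) (pu u) \<and> is_morph (Lu u) (Ru u) (qu u) \<and>
     (\<forall>x \<in> V (rL \<rho>). \<exists>y. (mV (qu u) \<circ>\<^sub>m mV (pu u)) x = Some y \<and>
         (\<exists>!z. mV (qu u) z = Some y)) \<and>
     (\<forall>x \<in> E (rL \<rho>). \<exists>y. (mE (qu u) \<circ>\<^sub>m mE (pu u)) x = Some y \<and>
         (\<exists>!z. mE (qu u) z = Some y)) \<and>
     Qset \<rho> u \<noteq> {}"

definition wf_qrule :: "('l \<Rightarrow> nat) \<Rightarrow> 'l qrule \<Rightarrow> bool" where
  "wf_qrule ar \<rho> \<longleftrightarrow> wf_graph ar (rL \<rho>) \<and> wf_graph ar (rR \<rho>) \<and>
     is_morph (rL \<rho>) (rR \<rho>) (rr \<rho>) \<and> finite (rU \<rho>) \<and> (\<forall>u \<in> rU \<rho>. wf_qpair ar \<rho> u)"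

(* (pi2, gamma2) = (pi1, gamma1) \<oplus> u, where L2, R2 are the respective pushout objects *)
definition oplus_step :: "('l \<Rightarrow> nat) \<Rightarrow> 'l qrule \<Rightarrow> 'l qpair
    \<Rightarrow> 'l hgraph \<Rightarrow> 'l hgraph \<Rightarrow> morph \<Rightarrow> morph
    \<Rightarrow> 'l hgraph \<Rightarrow> 'l hgraph \<Rightarrow> morph \<Rightarrow> morph \<Rightarrow> bool" where
  "oplus_step ar \<rho> u L1 R1 \<pi>1 \<gamma>1 L2 R2 \<pi>2 \<gamma>2 \<longleftrightarrow>
     (\<exists>p' \<pi>' \<alpha> \<beta>.
        is_pushout ar (rL \<rho>) L1 (Lu u) \<pi>1 (pu u) L2 p' \<pi>' \<and>
        is_pushout ar (rL \<rho>) R1 (Ru u) (\<gamma>1 \<circ>\<^sub>g \<pi>1) (qu u \<circ>\<^sub>g pu u) R2 \<alpha> \<beta> \<and>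
        is_morph L2 R2 \<gamma>2 \<and>
        \<gamma>2 \<circ>\<^sub>g p' = \<alpha> \<circ>\<^sub>g \<gamma>1 \<and> \<gamma>2 \<circ>\<^sub>g \<pi>' = \<beta> \<circ>\<^sub>g qu u \<and>
        \<pi>2 = p' \<circ>\<^sub>g \<pi>1)"

inductive is_instantiation :: "('l \<Rightarrow> nat) \<Rightarrow> 'l qrule
    \<Rightarrow> 'l hgraph \<Rightarrow> 'l hgraph \<Rightarrow> morph \<Rightarrow> morph \<Rightarrow> bool"
  for ar \<rho> where
  base: "is_instantiation ar \<rho> (rL \<rho>) (rR \<rho>) (id_morph (rL \<rho>)) (rr \<rho>)"
| step: "is_instantiation ar \<rho> L1 R1 \<pi>1 \<gamma>1 \<Longrightarrow> u \<in> rU \<rho> \<Longrightarrow>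
         oplus_step ar \<rho> u L1 R1 \<pi>1 \<gamma>1 L2 R2 \<pi>2 \<gamma>2 \<Longrightarrow>
         is_instantiation ar \<rho> L2 R2 \<pi>2 \<gamma>2"

end

theory Submission
  imports Defs
begin

definition minv :: "(nat \<rightharpoonup> nat) \<Rightarrow> (nat \<rightharpoonup> nat)" where
  "minv f x = (if x \<in> ran f then Some (THE y. f y = Some x) else None)"

lemma minv_Some:
  assumes "inj_on f (dom f)" "f y = Some x" shows "minv f x = Some y"
proof -
  have "x \<in> ran f" using assms(2) by (auto simp: ran_def)
  moreover have "(THE y. f y = Some x) = y"
    using assms by (intro the_equality) (auto simp: inj_on_def dom_def)
  ultimately show ?thesis by (simp add: minv_def)
qed

lemma minv_None: "x \<notin> ran f \<Longrightarrow> minv f x = None"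
  by (simp add: minv_def)

lemma minv_dom: "dom (minv f) = ran f"
  by (auto simp: minv_def dom_def)

lemma minv_ran:
  assumes "inj_on f (dom f)" shows "ran (minv f) \<subseteq> dom f"
proof
  fix y assume "y \<in> ran (minv f)"
  then obtain x where "minv f x = Some y" by (auto simp: ran_def)
  then have "x \<in> ran f" and y: "y = (THE y. f y = Some x)" by (auto simp: minv_def split: if_splits)
  then obtain y' where "f y' = Some x" by (auto simp: ran_def)
  with assms have "minv f x = Some y'" by (rule minv_Some)
  with \<open>minv f x = Some y\<close> show "y \<in> dom f" using \<open>f y' = Some x\<close> by auto
qed

lemma map_comp_assoc': "(h \<circ>\<^sub>m g) \<circ>\<^sub>m f = h \<circ>\<^sub>m (g \<circ>\<^sub>m f)"
  by (rule ext) (auto simp: map_comp_def split: option.splits)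

lemma mcomp_assoc: "(h \<circ>\<^sub>g g) \<circ>\<^sub>g f = h \<circ>\<^sub>g (g \<circ>\<^sub>g f)"
  by (simp add: mcomp_def map_comp_assoc')

lemma comm_map:
  fixes f mu m d c :: "nat \<rightharpoonup> nat"
  assumes inj: "inj_on mu (dom mu)" and domf: "dom f \<subseteq> ran mu"
    and h: "m \<circ>\<^sub>m (f \<circ>\<^sub>m mu) = d \<circ>\<^sub>m c"
  shows "m \<circ>\<^sub>m f = d \<circ>\<^sub>m ((\<lambda>v. if v \<in> dom d then Some v else None) \<circ>\<^sub>m c \<circ>\<^sub>m minv mu)"
proof (rule ext)
  fix x
  show "(m \<circ>\<^sub>m f) x = (d \<circ>\<^sub>m ((\<lambda>v. if v \<in> dom d then Some v else None) \<circ>\<^sub>m c \<circ>\<^sub>m minv mu)) x"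
  proof (cases "x \<in> ran mu")
    case True
    then obtain y where y: "mu y = Some x" by (auto simp: ran_def)
    have mi: "minv mu x = Some y" using inj y by (rule minv_Some)
    have "(m \<circ>\<^sub>m (f \<circ>\<^sub>m mu)) y = (d \<circ>\<^sub>m c) y" using h by simp
    then show ?thesis using y mi
      by (auto simp: map_comp_def split: option.splits if_splits)
  next
    case False
    then have "f x = None" using domf by auto
    then show ?thesis using False by (simp add: minv_None map_comp_def)
  qed
qed

lemma univ_map:
  fixes f mu m d c x1 x2 :: "nat \<rightharpoonup> nat"
  assumes inj: "inj_on mu (dom mu)" and domx2: "dom x2 \<subseteq> dom d"
    and h: "m \<circ>\<^sub>m (f \<circ>\<^sub>m mu) = d \<circ>\<^sub>m c"
    and h2: "x1 \<circ>\<^sub>m f = x2 \<circ>\<^sub>m ((\<lambda>v. if v \<in> dom d then Some v else None) \<circ>\<^sub>m c \<circ>\<^sub>m minv mu)"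
  shows "x1 \<circ>\<^sub>m (f \<circ>\<^sub>m mu) = x2 \<circ>\<^sub>m c"
proof (rule ext)
  fix y
  show "(x1 \<circ>\<^sub>m (f \<circ>\<^sub>m mu)) y = (x2 \<circ>\<^sub>m c) y"
  proof (cases "mu y")
    case None
    have "(m \<circ>\<^sub>m (f \<circ>\<^sub>m mu)) y = (d \<circ>\<^sub>m c) y" using h by simp
    then have "(d \<circ>\<^sub>m c) y = None" using None by simp
    then have "(x2 \<circ>\<^sub>m c) y = None" using domx2
      by (auto simp: map_comp_def split: option.splits)
    then show ?thesis using None by simp
  next
    case (Some x)
    have mi: "minv mu x = Some y" using inj Some by (rule minv_Some)
    have "(x1 \<circ>\<^sub>m f) x = (x2 \<circ>\<^sub>m ((\<lambda>v. if v \<in> dom d then Some v else None) \<circ>\<^sub>m c \<circ>\<^sub>m minv mu)) x"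
      using h2 by simp
    moreover have xs: "x2 \<circ>\<^sub>m (\<lambda>v. if v \<in> dom d then Some v else None) = x2"
    proof (rule ext)
      fix z show "(x2 \<circ>\<^sub>m (\<lambda>v. if v \<in> dom d then Some v else None)) z = x2 z"
      proof (cases "z \<in> dom d")
        case False
        then have "z \<notin> dom x2" using domx2 by blast
        then show ?thesis using False by (simp add: domIff)
      qed simp
    qed
    ultimately have "(x1 \<circ>\<^sub>m f) x = (x2 \<circ>\<^sub>m c \<circ>\<^sub>m minv mu) x"
      by (metis map_comp_assoc')
    then show ?thesis using Some mi by (simp add: map_comp_def)
  qed
qed

lemma morph_comp:
  assumes f: "is_morph A B f" and g: "is_morph B C g"
  shows "is_morph A C (g \<circ>\<^sub>g f)"
  unfolding is_morph_def
proof (intro conjI allI impI)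
  show "dom (mV (g \<circ>\<^sub>g f)) \<subseteq> V A" using f unfolding is_morph_def mcomp_def
    by (auto simp: map_comp_def split: option.splits)
  show "ran (mV (g \<circ>\<^sub>g f)) \<subseteq> V C" using g unfolding is_morph_def mcomp_def
    by (auto simp: map_comp_def ran_def split: option.splits)
  show "dom (mE (g \<circ>\<^sub>g f)) \<subseteq> E A" using f unfolding is_morph_def mcomp_def
    by (auto simp: map_comp_def split: option.splits)
  show "ran (mE (g \<circ>\<^sub>g f)) \<subseteq> E C" using g unfolding is_morph_def mcomp_def
    by (fastforce simp: map_comp_def ran_def split: option.splits)
  fix e e''
  assume "mE (g \<circ>\<^sub>g f) e = Some e''"
  then obtain e' where fe: "mE f e = Some e'" and ge: "mE g e' = Some e''"
    by (auto simp: mcomp_def map_comp_def split: option.splits)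
  have f1: "set (conn A e) \<subseteq> dom (mV f)" and f2: "lab B e' = lab A e"
    and f3: "map (\<lambda>v. the (mV f v)) (conn A e) = conn B e'"
    using f fe unfolding is_morph_def by blast+
  have g1: "set (conn B e') \<subseteq> dom (mV g)" and g2: "lab C e'' = lab B e'"
    and g3: "map (\<lambda>v. the (mV g v)) (conn B e') = conn C e''"
    using g ge unfolding is_morph_def by blast+
  have key: "\<And>v. v \<in> set (conn A e) \<Longrightarrow> \<exists>w. mV f v = Some w \<and> w \<in> set (conn B e') \<and> w \<in> dom (mV g)"
  proof -
    fix v assume v: "v \<in> set (conn A e)"
    then obtain w where w: "mV f v = Some w" using f1 by auto
    have "w \<in> set (conn B e')" using v w f3[symmetric] by force
    then show "\<exists>w. mV f v = Some w \<and> w \<in> set (conn B e') \<and> w \<in> dom (mV g)" using w g1 by auto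
  qed
  show "set (conn A e) \<subseteq> dom (mV (g \<circ>\<^sub>g f))"
    using key by (fastforce simp: mcomp_def map_comp_def)
  show "lab C e'' = lab A e" using f2 g2 by simp
  have "map (\<lambda>v. the (mV (g \<circ>\<^sub>g f) v)) (conn A e) = map (\<lambda>w. the (mV g w)) (map (\<lambda>v. the (mV f v)) (conn A e))"
    using key by (fastforce simp: mcomp_def map_comp_def)
  then show "map (\<lambda>v. the (mV (g \<circ>\<^sub>g f) v)) (conn A e) = conn C e''" using f3 g3 by simp
qed

lemma inst_morph:
  assumes "wf_qrule ar \<rho>" "is_instantiation ar \<rho> L R \<pi> \<gamma>"
  shows "is_morph L R \<gamma>"
  using assms(2)
proof (induction rule: is_instantiation.induct)
  case base
  then show ?case using assms(1) by (simp add: wf_qrule_def)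
next
  case (step L1 R1 \<pi>1 \<gamma>1 u L2 R2 \<pi>2 \<gamma>2)
  then show ?case by (auto simp: oplus_step_def)
qed

lemma minv_morph:
  assumes sm: "subgraph_morph B A mu" and wfA: "wf_graph ar A"
  shows "is_morph A B (minv (mV mu), minv (mE mu))"
proof -
  have mu: "is_morph B A mu" and inj: "injective mu" and sur: "surjective A mu"
    using sm by (auto simp: subgraph_morph_def)
  have injV: "inj_on (mV mu) (dom (mV mu))" and injE: "inj_on (mE mu) (dom (mE mu))"
    using inj by (auto simp: injective_def)
  have ranV: "ran (mV mu) = V A" and ranE: "ran (mE mu) = E A" using sur by (auto simp: surjective_def)
  show ?thesis unfolding is_morph_def fst_conv snd_conv
  proof (intro conjI allI impI)
    show "dom (minv (mV mu)) \<subseteq> V A" by (simp add: minv_dom ranV)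
    show "dom (minv (mE mu)) \<subseteq> E A" by (simp add: minv_dom ranE)
    show "ran (minv (mV mu)) \<subseteq> V B" using minv_ran[OF injV] mu by (auto simp: is_morph_def)
    show "ran (minv (mE mu)) \<subseteq> E B" using minv_ran[OF injE] mu by (auto simp: is_morph_def)
    fix e y assume my: "minv (mE mu) e = Some y"
    then have "e \<in> ran (mE mu)" by (auto simp: minv_def split: if_splits)
    then obtain y' where y': "mE mu y' = Some e" by (auto simp: ran_def)
    have "minv (mE mu) e = Some y'" using injE y' by (rule minv_Some)
    with my have ye: "mE mu y = Some e" using y' by simp
    have m1: "set (conn B y) \<subseteq> dom (mV mu)" and m2: "lab A e = lab B y"
      and m3: "map (\<lambda>v. the (mV mu v)) (conn B y) = conn A e"
      using mu ye unfolding is_morph_def by blast+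
    have "e \<in> E A" using ranE \<open>e \<in> ran (mE mu)\<close> by simp
    then show "set (conn A e) \<subseteq> dom (minv (mV mu))" using wfA by (auto simp: wf_graph_def minv_dom ranV)
    show "lab B y = lab A e" using m2 by simp
    have "map (\<lambda>v. the (minv (mV mu) v)) (conn A e)
          = map (\<lambda>w. the (minv (mV mu) (the (mV mu w)))) (conn B y)"
      using m3[symmetric] by simp
    also have "\<dots> = conn B y"
    proof (rule map_idI)
      fix w assume "w \<in> set (conn B y)"
      then obtain x where x: "mV mu w = Some x" using m1 by auto
      then have "minv (mV mu) x = Some w" using injV by (intro minv_Some)
      then show "the (minv (mV mu) (the (mV mu w))) = w" using x by simp
    qed
    finally show "map (\<lambda>v. the (minv (mV mu) v)) (conn A e) = conn B y" .
  qed
qed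

lemma restr_facts:
  assumes d: "is_morph H2 G d" and wf: "wf_graph ar H2"
    and H1: "H1 = H2\<lparr>V := dom (mV d), E := dom (mE d)\<rparr>"
  shows "wf_graph ar H1" and "is_morph H2 H1 (id_morph H1)"
    and "subgraph_morph H2 H1 (id_morph H1)" and "is_morph H1 G d"
    and "\<And>X x. is_morph H1 X x \<Longrightarrow> is_morph H2 X x"
proof -
  have dV: "dom (mV d) \<subseteq> V H2" and dE: "dom (mE d) \<subseteq> E H2"
    using d by (auto simp: is_morph_def)
  have dc: "\<And>e. e \<in> dom (mE d) \<Longrightarrow> set (conn H2 e) \<subseteq> dom (mV d)"
    using d unfolding is_morph_def by blast
  show wf1: "wf_graph ar H1" using wf dV dE dc unfolding wf_graph_def H1
    by (auto intro: finite_subset)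
  have dc': "\<And>e x y. mE d e = Some y \<Longrightarrow> x \<in> set (conn H2 e) \<Longrightarrow> mV d x \<noteq> None"
    using dc by blast
  show m1: "is_morph H2 H1 (id_morph H1)"
    using dV dE dc dc' unfolding is_morph_def id_morph_def H1
    by (auto simp: ran_def dom_def split: if_splits intro!: map_idI)
  show "subgraph_morph H2 H1 (id_morph H1)" unfolding subgraph_morph_def
    using m1 by (auto simp: injective_def surjective_def id_morph_def inj_on_def ran_def split: if_splits)
  show "is_morph H1 G d" using d unfolding is_morph_def H1 by (simp add: domI)
  fix X x assume "is_morph H1 X x"
  then show "is_morph H2 X x" using dV dE unfolding is_morph_def H1 by (simp, blast)
qed

theorem mainTheorem3:
  fixes ar :: "'l::finite \<Rightarrow> nat"
    and \<rho> :: "'l qrule" and u :: "'l qpair"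
    and L1 R1 L2 R2 R' G :: "'l hgraph"
    and \<pi>1 \<gamma>1 \<pi>2 \<gamma>2 \<mu>L \<mu>R \<mu>R' m :: morph
  assumes "wf_qrule ar \<rho>"
    and "is_instantiation ar \<rho> L1 R1 \<pi>1 \<gamma>1"
    and "is_instantiation ar \<rho> L2 R2 \<pi>2 \<gamma>2"
    and "u \<in> rU \<rho>"
    and "oplus_step ar \<rho> u L1 R1 \<pi>1 \<gamma>1 L2 R2 \<pi>2 \<gamma>2"
    and "wf_graph ar R'" and "wf_graph ar G"
    and "subgraph_morph L2 L1 \<mu>L"
    and "subgraph_morph R2 R1 \<mu>R"
    and "subgraph_morph R1 R' \<mu>R'"
    and "\<gamma>1 \<circ>\<^sub>g \<mu>L = \<mu>R \<circ>\<^sub>g \<gamma>2"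
    and "total_inj ar R' G m"
  shows "\<forall>(H2 :: 'l hgraph) m2' d2.
           is_po_complement ar L2 R' G (\<mu>R' \<circ>\<^sub>g \<mu>R \<circ>\<^sub>g \<gamma>2) m H2 m2' d2 \<and>
           total_inj ar L2 H2 m2' \<longrightarrow>
           (\<exists>(H1 :: 'l hgraph) m1' d1.
              is_po_complement ar L1 R' G (\<mu>R' \<circ>\<^sub>g \<gamma>1) m H1 m1' d1 \<and> subgraph H1 H2)"
proof (intro allI impI, elim conjE)
  fix H2 m2' d2
  assume po: "is_po_complement ar L2 R' G (\<mu>R' \<circ>\<^sub>g \<mu>R \<circ>\<^sub>g \<gamma>2) m H2 m2' d2"
    and ti: "total_inj ar L2 H2 m2'"
  define a where "a = \<mu>R' \<circ>\<^sub>g \<gamma>1"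
  have phi: "\<mu>R' \<circ>\<^sub>g \<mu>R \<circ>\<^sub>g \<gamma>2 = a \<circ>\<^sub>g \<mu>L"
    using assms(11) by (simp add: a_def mcomp_assoc)
  have P: "is_pushout ar L2 R' H2 (a \<circ>\<^sub>g \<mu>L) m2' G m d2"
    using po by (simp add: is_po_complement_def phi)
  have wfL2: "wf_graph ar L2" and wfH2: "wf_graph ar H2"
    and mm2: "is_morph L2 H2 m2'" and mm: "is_morph R' G m" and md2: "is_morph H2 G d2"
    and comm: "m \<circ>\<^sub>g (a \<circ>\<^sub>g \<mu>L) = d2 \<circ>\<^sub>g m2'"
    and univ: "\<And>(X :: 'l hgraph) x1 x2. wf_graph ar X \<Longrightarrow> is_morph R' X x1 \<Longrightarrow> is_morph H2 X x2 \<Longrightarrow>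
        x1 \<circ>\<^sub>g (a \<circ>\<^sub>g \<mu>L) = x2 \<circ>\<^sub>g m2' \<Longrightarrow>
        (\<exists>!h. is_morph G X h \<and> h \<circ>\<^sub>g m = x1 \<and> h \<circ>\<^sub>g d2 = x2)"
    using P unfolding is_pushout_def by blast+
  have wfL1: "wf_graph ar L1" using assms(5) unfolding oplus_step_def is_pushout_def by blast
  have mg1: "is_morph L1 R1 \<gamma>1" using inst_morph[OF assms(1) assms(2)] .
  have mR': "is_morph R1 R' \<mu>R'" using assms(10) by (simp add: subgraph_morph_def)
  have ma: "is_morph L1 R' a" unfolding a_def using morph_comp[OF mg1 mR'] .
  define H1 where "H1 = H2\<lparr>V := dom (mV d2), E := dom (mE d2)\<rparr>"
  note R = restr_facts[OF md2 wfH2 H1_def]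
  define s where "s = id_morph H1"
  define \<mu>i where "\<mu>i = (minv (mV \<mu>L), minv (mE \<mu>L))"
  define c1 where "c1 = s \<circ>\<^sub>g m2' \<circ>\<^sub>g \<mu>i"
  have mui: "is_morph L1 L2 \<mu>i" unfolding \<mu>i_def using minv_morph[OF assms(8) wfL1] .
  have mc1: "is_morph L1 H1 c1" unfolding c1_def s_def
    using morph_comp[OF mui morph_comp[OF mm2 R(2)]] .
  have injV: "inj_on (mV \<mu>L) (dom (mV \<mu>L))" and injE: "inj_on (mE \<mu>L) (dom (mE \<mu>L))"
    using assms(8) by (auto simp: subgraph_morph_def injective_def)
  have ranV: "ran (mV \<mu>L) = V L1" and ranE: "ran (mE \<mu>L) = E L1"
    using assms(8) by (auto simp: subgraph_morph_def surjective_def)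
  have domaV: "dom (mV a) \<subseteq> ran (mV \<mu>L)" and domaE: "dom (mE a) \<subseteq> ran (mE \<mu>L)"
    using ma ranV ranE by (auto simp: is_morph_def)
  have commV: "mV m \<circ>\<^sub>m (mV a \<circ>\<^sub>m mV \<mu>L) = mV d2 \<circ>\<^sub>m mV m2'"
    and commE: "mE m \<circ>\<^sub>m (mE a \<circ>\<^sub>m mE \<mu>L) = mE d2 \<circ>\<^sub>m mE m2'"
    using comm by (simp_all add: mcomp_def)
  have sV: "mV s = (\<lambda>v. if v \<in> dom (mV d2) then Some v else None)"
    and sE: "mE s = (\<lambda>v. if v \<in> dom (mE d2) then Some v else None)"
    by (simp_all add: s_def id_morph_def H1_def)
  have c1V: "mV c1 = (\<lambda>v. if v \<in> dom (mV d2) then Some v else None) \<circ>\<^sub>m mV m2' \<circ>\<^sub>m minv (mV \<mu>L)"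
    and c1E: "mE c1 = (\<lambda>v. if v \<in> dom (mE d2) then Some v else None) \<circ>\<^sub>m mE m2' \<circ>\<^sub>m minv (mE \<mu>L)"
    by (simp_all add: c1_def mcomp_def sV sE \<mu>i_def)
  have comm1: "m \<circ>\<^sub>g a = d2 \<circ>\<^sub>g c1"
    using comm_map[OF injV domaV commV] comm_map[OF injE domaE commE]
    by (simp add: mcomp_def c1V c1E)
  have "is_pushout ar L1 R' H1 a c1 G m d2"
    unfolding is_pushout_def
  proof (intro conjI allI impI)
    show "wf_graph ar L1" by (fact wfL1)
    show "wf_graph ar R'" by (fact assms(6))
    show "wf_graph ar H1" by (fact R(1))
    show "wf_graph ar G" by (fact assms(7))
    show "is_morph L1 R' a" by (fact ma)
    show "is_morph L1 H1 c1" by (fact mc1)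
    show "is_morph R' G m" by (fact mm)
    show "is_morph H1 G d2" by (fact R(4))
    show "m \<circ>\<^sub>g a = d2 \<circ>\<^sub>g c1" by (fact comm1)
    fix X :: "'l hgraph" and x1 x2
    assume H: "wf_graph ar X \<and> is_morph R' X x1 \<and> is_morph H1 X x2 \<and> x1 \<circ>\<^sub>g a = x2 \<circ>\<^sub>g c1"
    then have wfX: "wf_graph ar X" and mx1: "is_morph R' X x1" and mx2: "is_morph H1 X x2"
      and eq: "x1 \<circ>\<^sub>g a = x2 \<circ>\<^sub>g c1" by auto
    have dx2V: "dom (mV x2) \<subseteq> dom (mV d2)" and dx2E: "dom (mE x2) \<subseteq> dom (mE d2)"
      using mx2 by (auto simp: is_morph_def H1_def)
    have eqV: "mV x1 \<circ>\<^sub>m mV a = mV x2 \<circ>\<^sub>m ((\<lambda>v. if v \<in> dom (mV d2) then Some v else None) \<circ>\<^sub>m mV m2' \<circ>\<^sub>m minv (mV \<mu>L))"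
      and eqE: "mE x1 \<circ>\<^sub>m mE a = mE x2 \<circ>\<^sub>m ((\<lambda>v. if v \<in> dom (mE d2) then Some v else None) \<circ>\<^sub>m mE m2' \<circ>\<^sub>m minv (mE \<mu>L))"
      using eq by (simp_all add: mcomp_def c1V c1E)
    have eq2: "x1 \<circ>\<^sub>g (a \<circ>\<^sub>g \<mu>L) = x2 \<circ>\<^sub>g m2'"
      using univ_map[OF injV dx2V commV eqV] univ_map[OF injE dx2E commE eqE]
      by (simp add: mcomp_def)
    show "\<exists>!h. is_morph G X h \<and> h \<circ>\<^sub>g m = x1 \<and> h \<circ>\<^sub>g d2 = x2"
      using univ[OF wfX mx1 R(5)[OF mx2] eq2] .
  qed
  moreover have "subgraph H1 H2" unfolding subgraph_def using R(3) by blast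
  ultimately show "\<exists>H1 m1' d1. is_po_complement ar L1 R' G (\<mu>R' \<circ>\<^sub>g \<gamma>1) m H1 m1' d1 \<and> subgraph H1 H2"
    unfolding is_po_complement_def a_def by blast
qed

end
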